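(* Let $\theta\in\mathrm{Irr}(N)$. Then $K_{\tilde\theta}=\mathrm{Stab}_G(\theta)$ is a normal subgroup of $L_{\tilde\theta}=\mathrm{Stab}_G(\tilde\theta)$.
   Context: $G$ is a profinite group and $N$ is an open normal subgroup of $G$. $\mathrm{Irr}(H)$ denotes the continuous irreducible complex characters of $H$ and $\mathrm{Lin}(H)$ the continuous degree-one characters. For $H\le G$, $\lambda,\delta\in\mathrm{Irr}(H)$ are $G$-twist equivalent if $\lambda=\delta\,\psi|_H$ for some $\psi\in\mathrm{Lin}(G)$; $\tilde\theta$ denotes the $G$-twist class of $\theta$. $G$ acts on $\mathrm{Irr}(N)$ by ${}^g\theta(n)=\theta(g^{-1}ng)$, and this induces an action $g\cdot\tilde\theta=\widetilde{{}^g\theta}$ on $G$-twist classes of $\mathrm{Irr}(N)$. $K_{\tilde\theta}=\mathrm{Stab}_G(\theta)$ (which depends only on $\tilde\theta$) and $L_{\tilde\theta}=\mathrm{Stab}_G(\tilde\theta)$. *)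

theory Defs
  imports "HOL-Algebra.Coset" "HOL-Analysis.Analysis" "Jordan_Normal_Form.Matrix"
begin

definition topological_group :: "('a, 'b) monoid_scheme \<Rightarrow> 'a topology \<Rightarrow> bool" where
  "topological_group G T \<longleftrightarrow> group G \<and> topspace T = carrier G
     \<and> continuous_map (prod_topology T T) T (\<lambda>(x, y). x \<otimes>\<^bsub>G\<^esub> y)
     \<and> continuous_map T T (\<lambda>x. inv\<^bsub>G\<^esub> x)"

definition profinite_group :: "('a, 'b) monoid_scheme \<Rightarrow> 'a topology \<Rightarrow> bool" where
  "profinite_group G T \<longleftrightarrow> topological_group G T \<and> compact_space T \<and> Hausdorff_space T
     \<and> (\<forall>x y. connected_component_of T x y \<longrightarrow> x = y)"

definition mat_trace :: "complex mat \<Rightarrow> complex" where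
  "mat_trace A = (\<Sum>i<dim_row A. A $$ (i, i))"

definition cont_rep ::
  "('a, 'b) monoid_scheme \<Rightarrow> 'a topology \<Rightarrow> 'a set \<Rightarrow> nat \<Rightarrow> ('a \<Rightarrow> complex mat) \<Rightarrow> bool" where
  "cont_rep G T H n \<rho> \<longleftrightarrow>
     (\<forall>x\<in>H. \<rho> x \<in> carrier_mat n n)
     \<and> \<rho> \<one>\<^bsub>G\<^esub> = 1\<^sub>m n
     \<and> (\<forall>x\<in>H. \<forall>y\<in>H. \<rho> (x \<otimes>\<^bsub>G\<^esub> y) = \<rho> x * \<rho> y)
     \<and> (\<forall>i<n. \<forall>j<n. continuous_map (subtopology T H) euclidean (\<lambda>x. \<rho> x $$ (i, j)))"

definition is_subspace :: "nat \<Rightarrow> complex vec set \<Rightarrow> bool" where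
  "is_subspace n W \<longleftrightarrow> W \<subseteq> carrier_vec n \<and> 0\<^sub>v n \<in> W
     \<and> (\<forall>v\<in>W. \<forall>w\<in>W. v + w \<in> W) \<and> (\<forall>c. \<forall>v\<in>W. c \<cdot>\<^sub>v v \<in> W)"

definition irreducible_rep :: "'a set \<Rightarrow> nat \<Rightarrow> ('a \<Rightarrow> complex mat) \<Rightarrow> bool" where
  "irreducible_rep H n \<rho> \<longleftrightarrow> n > 0 \<and>
     (\<forall>W. is_subspace n W \<and> (\<forall>x\<in>H. \<forall>w\<in>W. \<rho> x *\<^sub>v w \<in> W)
          \<longrightarrow> W = {0\<^sub>v n} \<or> W = carrier_vec n)"

definition Irr :: "('a, 'b) monoid_scheme \<Rightarrow> 'a topology \<Rightarrow> 'a set \<Rightarrow> ('a \<Rightarrow> complex) set" where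
  "Irr G T H = {chi. \<exists>n \<rho>. cont_rep G T H n \<rho> \<and> irreducible_rep H n \<rho>
       \<and> chi = (\<lambda>x. if x \<in> H then mat_trace (\<rho> x) else 0)}"

definition Lin :: "('a, 'b) monoid_scheme \<Rightarrow> 'a topology \<Rightarrow> ('a \<Rightarrow> complex) set" where
  "Lin G T = {\<psi>. continuous_map T euclidean \<psi>
       \<and> (\<forall>x\<in>carrier G. \<psi> x \<noteq> 0)
       \<and> (\<forall>x\<in>carrier G. \<forall>y\<in>carrier G. \<psi> (x \<otimes>\<^bsub>G\<^esub> y) = \<psi> x * \<psi> y)}"

text \<open>The G-twist class of \<theta> \<in> Irr(H): all \<theta> \<cdot> \<psi>|_H with \<psi> \<in> Lin(G)
  (\<theta> vanishes outside H, so the product is the restriction).\<close>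
definition twist_class :: "('a, 'b) monoid_scheme \<Rightarrow> 'a topology \<Rightarrow> ('a \<Rightarrow> complex) \<Rightarrow> ('a \<Rightarrow> complex) set" where
  "twist_class G T \<theta> = {lam. \<exists>\<psi>\<in>Lin G T. lam = (\<lambda>x. \<theta> x * \<psi> x)}"

definition conj_char :: "('a, 'b) monoid_scheme \<Rightarrow> 'a set \<Rightarrow> 'a \<Rightarrow> ('a \<Rightarrow> complex) \<Rightarrow> ('a \<Rightarrow> complex)" where
  "conj_char G N g \<theta> = (\<lambda>n. if n \<in> N then \<theta> (inv\<^bsub>G\<^esub> g \<otimes>\<^bsub>G\<^esub> n \<otimes>\<^bsub>G\<^esub> g) else 0)"

text \<open>K = Stab_G(\<theta>) and L = Stab_G(\<theta>~) for the induced action g\<cdot>\<theta>~ = (g\<theta>)~.\<close>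
definition stab_char :: "('a, 'b) monoid_scheme \<Rightarrow> 'a set \<Rightarrow> ('a \<Rightarrow> complex) \<Rightarrow> 'a set" where
  "stab_char G N \<theta> = {g \<in> carrier G. conj_char G N g \<theta> = \<theta>}"

definition stab_twist_class ::
  "('a, 'b) monoid_scheme \<Rightarrow> 'a topology \<Rightarrow> 'a set \<Rightarrow> ('a \<Rightarrow> complex) \<Rightarrow> 'a set" where
  "stab_twist_class G T N \<theta> =
     {g \<in> carrier G. twist_class G T (conj_char G N g \<theta>) = twist_class G T \<theta>}"

end

theory Submission
  imports Defs
begin

lemma lin_one: "\<psi> \<in> Lin G T \<Longrightarrow> group G \<Longrightarrow> \<psi> \<one>\<^bsub>G\<^esub> = 1"
proof -
  assume a: "\<psi> \<in> Lin G T" and g: "group G"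
  have o: "\<one>\<^bsub>G\<^esub> \<in> carrier G" using g by (simp add: group.is_monoid monoid.one_closed)
  have "\<psi> \<one>\<^bsub>G\<^esub> = \<psi> \<one>\<^bsub>G\<^esub> * \<psi> \<one>\<^bsub>G\<^esub>"
  proof -
    have "\<psi> (\<one>\<^bsub>G\<^esub> \<otimes>\<^bsub>G\<^esub> \<one>\<^bsub>G\<^esub>) = \<psi> \<one>\<^bsub>G\<^esub> * \<psi> \<one>\<^bsub>G\<^esub>"
      using a o unfolding Lin_def by blast
    moreover have "\<one>\<^bsub>G\<^esub> \<otimes>\<^bsub>G\<^esub> \<one>\<^bsub>G\<^esub> = \<one>\<^bsub>G\<^esub>"
      using g o by (simp add: group.is_monoid monoid.l_one)
    ultimately show ?thesis by simp
  qed
  moreover have "\<psi> \<one>\<^bsub>G\<^esub> \<noteq> 0" using a o unfolding Lin_def by auto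
  ultimately show ?thesis by (metis mult_cancel_left1)
qed

lemma lin_conj: fixes G (structure) assumes "\<psi> \<in> Lin G T" "group G" "g \<in> carrier G" "n \<in> carrier G"
  shows "\<psi> (inv\<^bsub>G\<^esub> g \<otimes>\<^bsub>G\<^esub> n \<otimes>\<^bsub>G\<^esub> g) = \<psi> n"
proof -
  interpret group G by fact
  have m: "\<forall>x\<in>carrier G. \<forall>y\<in>carrier G. \<psi> (x \<otimes> y) = \<psi> x * \<psi> y" using assms(1) unfolding Lin_def by auto
  have "\<psi> (inv g \<otimes> n \<otimes> g) = \<psi> (inv g) * \<psi> n * \<psi> g" using m assms by simp
  also have "\<dots> = \<psi> n * (\<psi> (inv g) * \<psi> g)" by simp
  also have "\<psi> (inv g) * \<psi> g = \<psi> (inv g \<otimes> g)" using m assms(3) inv_closed by metis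
  also have "\<dots> = 1" using lin_one[OF assms(1,2)] assms by simp
  finally show ?thesis by simp
qed

context
  fixes G (structure) and N :: "'a set"
  assumes nor: "N \<lhd> G"
begin

interpretation group G using nor normal.axioms(2) by blast

lemma NG: "N \<subseteq> carrier G" using nor normal_imp_subgroup subgroup.subset by blast

lemma conj_comp: assumes "g \<in> carrier G" "h \<in> carrier G"
  shows "conj_char G N g (conj_char G N h \<phi>) = conj_char G N (g \<otimes> h) \<phi>"
proof
  fix n
  show "conj_char G N g (conj_char G N h \<phi>) n = conj_char G N (g \<otimes> h) \<phi> n"
  proof (cases "n \<in> N")
    case True
    have "inv g \<otimes> n \<otimes> g \<in> N" using nor True assms
      by (metis inv_closed inv_inv normal_inv_iff)
    moreover have "inv h \<otimes> (inv g \<otimes> n \<otimes> g) \<otimes> h = inv (g \<otimes> h) \<otimes> n \<otimes> (g \<otimes> h)"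
      using assms True NG by (simp add: inv_mult_group m_assoc subsetD)
    ultimately show ?thesis using True unfolding conj_char_def by simp
  qed (simp add: conj_char_def)
qed

lemma conj_one: assumes "\<forall>x. x \<notin> N \<longrightarrow> \<phi> x = 0"
  shows "conj_char G N \<one> \<phi> = \<phi>"
  using assms NG unfolding conj_char_def by (auto simp: subsetD)

lemma conj_zero: "x \<notin> N \<Longrightarrow> conj_char G N g \<phi> x = 0"
  unfolding conj_char_def by simp

lemma conj_twist: assumes "\<psi> \<in> Lin G T" "g \<in> carrier G"
  shows "conj_char G N g (\<lambda>x. \<phi> x * \<psi> x) = (\<lambda>x. conj_char G N g \<phi> x * \<psi> x)"
proof
  fix n
  show "conj_char G N g (\<lambda>x. \<phi> x * \<psi> x) n = conj_char G N g \<phi> n * \<psi> n"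
    using lin_conj[OF assms(1) is_group assms(2), of n] NG
    unfolding conj_char_def by (auto simp: subsetD)
qed

lemma tc_conj: assumes "g \<in> carrier G"
  shows "twist_class G T (conj_char G N g \<phi>) = conj_char G N g ` twist_class G T \<phi>"
proof -
  have "twist_class G T (conj_char G N g \<phi>) = (\<lambda>\<psi>. (\<lambda>x. conj_char G N g \<phi> x * \<psi> x)) ` Lin G T"
    unfolding twist_class_def by auto
  also have "\<dots> = (\<lambda>\<psi>. conj_char G N g (\<lambda>x. \<phi> x * \<psi> x)) ` Lin G T"
    using conj_twist[OF _ assms] by (intro image_cong) auto
  also have "\<dots> = conj_char G N g ` twist_class G T \<phi>"
    unfolding twist_class_def by auto
  finally show ?thesis .
qed

end

lemma one_lin: "(\<lambda>x. 1) \<in> Lin G T"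
  unfolding Lin_def by auto

lemma main_aux:
  fixes G (structure) and T :: "'a topology"
    and N :: "'a set" and \<theta> :: "'a \<Rightarrow> complex"
  assumes "N \<lhd> G" and "\<theta> \<in> Irr G T N"
  shows "stab_char G N \<theta> \<lhd> G\<lparr>carrier := stab_twist_class G T N \<theta>\<rparr>"
proof -
  note nor = assms(1)
  interpret group G using nor normal.axioms(2) by blast
  define c where "c = conj_char G N"
  define tc where "tc = twist_class G T"
  define L where "L = stab_twist_class G T N \<theta>"
  define K where "K = stab_char G N \<theta>"
  have z: "\<forall>x. x \<notin> N \<longrightarrow> \<theta> x = 0" using assms(2) unfolding Irr_def by auto
  have tcz: "\<forall>x. x \<notin> N \<longrightarrow> \<phi> x = 0" if "\<phi> \<in> tc \<theta>" for \<phi>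
    using that z unfolding tc_def twist_class_def by auto
  have Ld: "L = {g \<in> carrier G. c g ` tc \<theta> = tc \<theta>}"
    unfolding L_def stab_twist_class_def c_def tc_def using tc_conj[OF nor] by auto
  have comp: "c g (c h \<phi>) = c (g \<otimes> h) \<phi>" if "g \<in> carrier G" "h \<in> carrier G" for g h \<phi>
    unfolding c_def using conj_comp[OF nor that] .
  have cone: "c \<one> \<phi> = \<phi>" if "\<phi> \<in> tc \<theta>" for \<phi>
    unfolding c_def using conj_one[OF nor tcz[OF that]] .
  have subL: "subgroup L G"
  proof
    show "L \<subseteq> carrier G" unfolding Ld by auto
    show "\<one> \<in> L" unfolding Ld using cone by (auto simp: image_def)
    fix g h assume g: "g \<in> L" and h: "h \<in> L"
    have gc: "g \<in> carrier G" "h \<in> carrier G" using g h unfolding Ld by auto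
    have "c (g \<otimes> h) ` tc \<theta> = c g ` c h ` tc \<theta>"
      using comp[OF gc] by (auto simp: image_def)
    also have "\<dots> = tc \<theta>" using g h unfolding Ld by auto
    finally show "g \<otimes> h \<in> L" unfolding Ld using gc by auto
  next
    fix g assume g: "g \<in> L"
    have gc: "g \<in> carrier G" using g unfolding Ld by auto
    have "c (inv g) ` tc \<theta> = c (inv g) ` c g ` tc \<theta>" using g unfolding Ld by auto
    also have "\<dots> = c (inv g \<otimes> g) ` tc \<theta>"
      using comp[OF _ gc, of "inv g"] gc by (auto simp: image_def)
    also have "\<dots> = tc \<theta>" using gc cone by (auto simp: image_def)
    finally show "inv g \<in> L" unfolding Ld using gc by auto
  qed
  have KL: "K \<subseteq> L"
    unfolding K_def L_def stab_char_def stab_twist_class_def by auto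
  have Kd: "K = {g \<in> carrier G. c g \<theta> = \<theta>}" unfolding K_def stab_char_def c_def by auto
  have thtc: "\<theta> \<in> tc \<theta>" unfolding tc_def twist_class_def using one_lin by fastforce
  have gL: "group (G\<lparr>carrier := L\<rparr>)" using subL subgroup.subgroup_is_group is_group by blast
  have subK: "subgroup K (G\<lparr>carrier := L\<rparr>)"
  proof
    show "K \<subseteq> carrier (G\<lparr>carrier := L\<rparr>)" using KL by simp
    show "\<one>\<^bsub>G\<lparr>carrier := L\<rparr>\<^esub> \<in> K" unfolding Kd using cone thtc by simp
    fix g h assume g: "g \<in> K" and h: "h \<in> K"
    have gc: "g \<in> carrier G" "h \<in> carrier G" using g h unfolding Kd by auto
    show "g \<otimes>\<^bsub>G\<lparr>carrier := L\<rparr>\<^esub> h \<in> K"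
      using comp[OF gc, of \<theta>] g h gc unfolding Kd by auto
  next
    fix g assume g: "g \<in> K"
    have gc: "g \<in> carrier G" using g unfolding Kd by auto
    have "inv\<^bsub>G\<lparr>carrier := L\<rparr>\<^esub> g = inv g"
      using g KL m_inv_consistent[OF subL] by auto
    moreover have "c (inv g) \<theta> = \<theta>"
    proof -
      have "c (inv g) \<theta> = c (inv g) (c g \<theta>)" using g unfolding Kd by auto
      also have "\<dots> = \<theta>" using comp[of "inv g" g \<theta>] gc cone thtc by simp
      finally show ?thesis .
    qed
    ultimately show "inv\<^bsub>G\<lparr>carrier := L\<rparr>\<^esub> g \<in> K" unfolding Kd using gc by auto
  qed
  have "K \<lhd> G\<lparr>carrier := L\<rparr>"
  proof (subst group.normal_inv_iff[OF gL], intro conjI ballI subK)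
    fix x h assume x: "x \<in> carrier (G\<lparr>carrier := L\<rparr>)" and h: "h \<in> K"
    have xL: "x \<in> L" using x by simp
    have xc: "x \<in> carrier G" using xL subL subgroup.subset by blast
    have hc: "h \<in> carrier G" using h unfolding Kd by auto
    have ix: "inv\<^bsub>G\<lparr>carrier := L\<rparr>\<^esub> x = inv x"
      using xL m_inv_consistent[OF subL] by auto
    have ixL: "inv x \<in> L" by (rule subgroup.m_inv_closed[OF subL xL])
    have ixc: "inv x \<in> carrier G" using xc by simp
    have im: "c (inv x) ` tc \<theta> = tc \<theta>" using ixL unfolding Ld by simp
    have "c (inv x) \<theta> \<in> tc \<theta>" using im thtc by (metis imageI)
    then obtain \<psi> where psi: "\<psi> \<in> Lin G T" and e: "c (inv x) \<theta> = (\<lambda>y. \<theta> y * \<psi> y)"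
      unfolding tc_def twist_class_def by auto
    have ch: "c h \<theta> = \<theta>" using h unfolding Kd by simp
    have "c h (c (inv x) \<theta>) = (\<lambda>y. c h \<theta> y * \<psi> y)"
      unfolding e unfolding c_def by (rule conj_twist[OF nor psi hc])
    also have "\<dots> = c (inv x) \<theta>" unfolding ch e ..
    finally have e2: "c h (c (inv x) \<theta>) = c (inv x) \<theta>" .
    have "c (x \<otimes> h \<otimes> inv x) \<theta> = c x (c h (c (inv x) \<theta>))"
      using comp xc hc ixc by (simp add: m_assoc)
    also have "\<dots> = c x (c (inv x) \<theta>)" by (simp only: e2)
    also have "\<dots> = \<theta>" using comp[of x "inv x"] xc cone thtc by simp
    finally show "x \<otimes>\<^bsub>G\<lparr>carrier := L\<rparr>\<^esub> h \<otimes>\<^bsub>G\<lparr>carrier := L\<rparr>\<^esub> inv\<^bsub>G\<lparr>carrier := L\<rparr>\<^esub> x \<in> K"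
      unfolding ix Kd using xc hc by simp
  qed
  thus ?thesis unfolding K_def L_def .
qed

theorem lemma2p3:
  fixes G :: "('a, 'b) monoid_scheme" and T :: "'a topology"
    and N :: "'a set" and \<theta> :: "'a \<Rightarrow> complex"
  assumes "profinite_group G T"
    and "N \<lhd> G" and "openin T N"
    and "\<theta> \<in> Irr G T N"
  shows "stab_char G N \<theta> \<lhd> G\<lparr>carrier := stab_twist_class G T N \<theta>\<rparr>"
  using main_aux[OF assms(2,4)] .

end
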